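(* Consider a homogeneous weighted stochastic block model with two communities, each of size $n$, where each pair of vertices independently receives a weight distributed as $p_n$ if both endpoints lie in the same community and as $q_n$ otherwise. Let $I$ be the Renyi divergence of order $\tfrac12$ between $p_n$ and $q_n$. If \[ \liminf_{n\to\infty}\frac{nI}{\log n}>1, \] then the maximum likelihood estimator of the community assignment recovers the true communities with probability converging to $1$ as $n\to\infty$.
   Context: The Renyi divergence of order $\tfrac12$ is $I=-2\log\int\sqrt{p_n(x)q_n(x)}\,dx$ for continuous distributions on $\mathbb{R}$ and $I=-2\log\sum_{\ell\ge0}\sqrt{p_n(\ell)q_n(\ell)}$ for discrete distributions on $\mathbb{N}$. *)

theory Defs
  imports "HOL-Probability.Probability"
begin

text \<open>Vertices are 0,...,2n-1. A community assignment is given by the set S of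
vertices in the first community; S is balanced if card S = n.\<close>

definition pairs :: "nat \<Rightarrow> (nat \<times> nat) set" where
  "pairs n = {(i, j). i < j \<and> j < 2 * n}"

definition balanced :: "nat \<Rightarrow> nat set set" where
  "balanced n = {S. S \<subseteq> {..<2 * n} \<and> card S = n}"

definition same_comm :: "nat set \<Rightarrow> nat \<times> nat \<Rightarrow> bool" where
  "same_comm S e \<longleftrightarrow> (fst e \<in> S \<longleftrightarrow> snd e \<in> S)"

definition wsbm :: "'a measure \<Rightarrow> ('a \<Rightarrow> real) \<Rightarrow> ('a \<Rightarrow> real) \<Rightarrow> nat \<Rightarrow> nat set
    \<Rightarrow> (nat \<times> nat \<Rightarrow> 'a) measure" where
  "wsbm M p q n S = (\<Pi>\<^sub>M e\<in>pairs n.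
      density M (\<lambda>x. ennreal (if same_comm S e then p x else q x)))"

definition likelihood :: "('a \<Rightarrow> real) \<Rightarrow> ('a \<Rightarrow> real) \<Rightarrow> nat \<Rightarrow> nat set
    \<Rightarrow> (nat \<times> nat \<Rightarrow> 'a) \<Rightarrow> real" where
  "likelihood p q n S w = (\<Prod>e\<in>pairs n. if same_comm S e then p (w e) else q (w e))"

definition mle_set :: "('a \<Rightarrow> real) \<Rightarrow> ('a \<Rightarrow> real) \<Rightarrow> nat
    \<Rightarrow> (nat \<times> nat \<Rightarrow> 'a) \<Rightarrow> nat set set" where
  "mle_set p q n w = {S \<in> balanced n. \<forall>T \<in> balanced n. likelihood p q n T w \<le> likelihood p q n S w}"

text \<open>The MLE recovers the communities: the maximizers are exactly the true
partition (up to swapping the two labels).\<close>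
definition mle_recovers :: "('a \<Rightarrow> real) \<Rightarrow> ('a \<Rightarrow> real) \<Rightarrow> nat \<Rightarrow> nat set
    \<Rightarrow> (nat \<times> nat \<Rightarrow> 'a) \<Rightarrow> bool" where
  "mle_recovers p q n S w \<longleftrightarrow> mle_set p q n w = {S, {..<2 * n} - S}"

definition bhattacharyya :: "'a measure \<Rightarrow> ('a \<Rightarrow> real) \<Rightarrow> ('a \<Rightarrow> real) \<Rightarrow> real" where
  "bhattacharyya M p q = (LINT x|M. sqrt (p x * q x))"

definition renyi_half :: "'a measure \<Rightarrow> ('a \<Rightarrow> real) \<Rightarrow> ('a \<Rightarrow> real) \<Rightarrow> ereal" where
  "renyi_half M p q = (if bhattacharyya M p q = 0 then \<infinity>
     else ereal (- 2 * ln (bhattacharyya M p q)))"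

end

theory Submission
  imports Defs
begin


lemma PiM_density:
  fixes M :: "'a measure" and f :: "'i \<Rightarrow> 'a \<Rightarrow> real"
  assumes sf: "sigma_finite_measure M" and fin: "finite I"
    and meas: "\<And>i. f i \<in> borel_measurable M"
    and nn: "\<And>i x. 0 \<le> f i x"
  shows "PiM I (\<lambda>i. density M (\<lambda>x. ennreal (f i x)))
       = density (PiM I (\<lambda>_. M)) (\<lambda>w. ennreal (\<Prod>i\<in>I. f i (w i)))"
proof -
  interpret M: sigma_finite_measure M by fact
  interpret PM: product_sigma_finite "\<lambda>_. M" by standard
  have sfd: "\<And>i. sigma_finite_measure (density M (\<lambda>x. ennreal (f i x)))"
    by (subst M.sigma_finite_iff_density_finite) (use meas in auto)
  interpret PD: product_sigma_finite "\<lambda>i. density M (\<lambda>x. ennreal (f i x))"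
    unfolding product_sigma_finite_def using sfd by blast
  show ?thesis
  proof (rule PD.PiM_eqI[symmetric, OF fin])
    show "sets (density (PiM I (\<lambda>_. M)) (\<lambda>w. ennreal (\<Prod>i\<in>I. f i (w i)))) =
          sets (PiM I (\<lambda>i. density M (\<lambda>x. ennreal (f i x))))"
      by (auto intro!: sets_PiM_cong)
  next
    fix A assume A: "\<And>i. i \<in> I \<Longrightarrow> A i \<in> sets (density M (\<lambda>x. ennreal (f i x)))"
    then have A': "\<And>i. i \<in> I \<Longrightarrow> A i \<in> sets M" by auto
    have "emeasure (density (PiM I (\<lambda>_. M)) (\<lambda>w. ennreal (\<Prod>i\<in>I. f i (w i)))) (Pi\<^sub>E I A)
        = (\<integral>\<^sup>+ w. ennreal (\<Prod>i\<in>I. f i (w i)) * indicator (Pi\<^sub>E I A) w \<partial>PiM I (\<lambda>_. M))"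
    proof (rule emeasure_density)
      show "(\<lambda>w. ennreal (\<Prod>i\<in>I. f i (w i))) \<in> borel_measurable (PiM I (\<lambda>_. M))"
        using meas by measurable
      show "Pi\<^sub>E I A \<in> sets (PiM I (\<lambda>_. M))"
        using A' by (auto intro!: sets_PiM_I_finite fin)
    qed
    also have "\<dots> = (\<integral>\<^sup>+ w. (\<Prod>i\<in>I. ennreal (f i (w i)) * indicator (A i) (w i)) \<partial>PiM I (\<lambda>_. M))"
    proof (rule nn_integral_cong)
      fix w assume "w \<in> space (PiM I (\<lambda>_. M))"
      then have ext: "w \<in> extensional I" by (auto simp: space_PiM PiE_def)
      have "indicator (Pi\<^sub>E I A) w = (\<Prod>i\<in>I. indicator (A i) (w i) :: ennreal)"
        using ext fin by (auto simp: indicator_def PiE_def Pi_def prod_zero_iff intro!: prod.neutral)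
      then show "ennreal (\<Prod>i\<in>I. f i (w i)) * indicator (Pi\<^sub>E I A) w
          = (\<Prod>i\<in>I. ennreal (f i (w i)) * indicator (A i) (w i))"
        using nn by (simp add: prod_ennreal prod.distrib)
    qed
    also have "\<dots> = (\<Prod>i\<in>I. \<integral>\<^sup>+ x. ennreal (f i x) * indicator (A i) x \<partial>M)"
      by (rule PM.product_nn_integral_prod[OF fin]) (use meas A' in measurable)
    also have "\<dots> = (\<Prod>i\<in>I. emeasure (density M (\<lambda>x. ennreal (f i x))) (A i))"
      by (rule prod.cong) (use meas A' in \<open>auto simp: emeasure_density\<close>)
    finally show "emeasure (density (PiM I (\<lambda>_. M)) (\<lambda>w. ennreal (\<Prod>i\<in>I. f i (w i)))) (Pi\<^sub>E I A) =
      (\<Prod>i\<in>I. emeasure (density M (\<lambda>x. ennreal (f i x))) (A i))" .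
  qed
qed



lemma sqrt_prod: "(\<Prod>i\<in>I. sqrt (f i)) = sqrt (\<Prod>i\<in>I. f i)"
  by (induction I rule: infinite_finite_induct) (auto simp: real_sqrt_mult)

lemma chernoff_bound:
  fixes M :: "'a measure" and a b :: "'i \<Rightarrow> 'a \<Rightarrow> real"
  assumes sf: "sigma_finite_measure M" and fin: "finite I"
    and ma: "\<And>i. a i \<in> borel_measurable M" and mb: "\<And>i. b i \<in> borel_measurable M"
    and na: "\<And>i x. 0 \<le> a i x" and nb: "\<And>i x. 0 \<le> b i x"
  shows "emeasure (PiM I (\<lambda>i. density M (\<lambda>x. ennreal (a i x))))
     {w \<in> space (PiM I (\<lambda>i. density M (\<lambda>x. ennreal (a i x)))). (\<Prod>i\<in>I. a i (w i)) \<le> (\<Prod>i\<in>I. b i (w i))}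
     \<le> (\<Prod>i\<in>I. \<integral>\<^sup>+ x. ennreal (sqrt (a i x * b i x)) \<partial>M)"
proof -
  interpret M: sigma_finite_measure M by fact
  interpret PM: product_sigma_finite "\<lambda>_. M" by standard
  let ?P = "PiM I (\<lambda>i. density M (\<lambda>x. ennreal (a i x)))"
  let ?Q = "PiM I (\<lambda>_. M)"
  have eq: "?P = density ?Q (\<lambda>w. ennreal (\<Prod>i\<in>I. a i (w i)))"
    by (rule PiM_density[OF sf fin ma na])
  have sp: "space ?P = space ?Q" by (simp add: eq)
  define E where "E = {w \<in> space ?Q. (\<Prod>i\<in>I. a i (w i)) \<le> (\<Prod>i\<in>I. b i (w i))}"
  have Em: "E \<in> sets ?Q" unfolding E_def using ma mb by measurable
  have "emeasure ?P {w \<in> space ?P. (\<Prod>i\<in>I. a i (w i)) \<le> (\<Prod>i\<in>I. b i (w i))} = emeasure ?P E"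
    by (simp add: E_def sp)
  also have "\<dots> = (\<integral>\<^sup>+ w. ennreal (\<Prod>i\<in>I. a i (w i)) * indicator E w \<partial>?Q)"
    unfolding eq by (rule emeasure_density) (use ma Em in measurable)
  also have "\<dots> \<le> (\<integral>\<^sup>+ w. (\<Prod>i\<in>I. ennreal (sqrt (a i (w i) * b i (w i)))) \<partial>?Q)"
  proof (rule nn_integral_mono)
    fix w
    have A0: "0 \<le> (\<Prod>i\<in>I. a i (w i))" by (simp add: prod_nonneg na)
    have B0: "0 \<le> (\<Prod>i\<in>I. b i (w i))" by (simp add: prod_nonneg nb)
    have sq: "(\<Prod>i\<in>I. sqrt (a i (w i) * b i (w i))) = sqrt ((\<Prod>i\<in>I. a i (w i)) * (\<Prod>i\<in>I. b i (w i)))"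
      by (simp add: sqrt_prod prod.distrib)
    show "ennreal (\<Prod>i\<in>I. a i (w i)) * indicator E w \<le> (\<Prod>i\<in>I. ennreal (sqrt (a i (w i) * b i (w i))))"
    proof (cases "w \<in> E")
      case True
      then have le: "(\<Prod>i\<in>I. a i (w i)) \<le> (\<Prod>i\<in>I. b i (w i))" by (simp add: E_def)
      have "(\<Prod>i\<in>I. a i (w i)) = sqrt ((\<Prod>i\<in>I. a i (w i)) * (\<Prod>i\<in>I. a i (w i)))"
        using A0 by simp
      also have "\<dots> \<le> sqrt ((\<Prod>i\<in>I. a i (w i)) * (\<Prod>i\<in>I. b i (w i)))"
        using A0 le by (intro real_sqrt_le_mono mult_left_mono) auto
      finally have "(\<Prod>i\<in>I. a i (w i)) \<le> (\<Prod>i\<in>I. sqrt (a i (w i) * b i (w i)))"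
        using sq by (simp add: na nb)
      then have "ennreal (\<Prod>i\<in>I. a i (w i)) \<le> ennreal (\<Prod>i\<in>I. sqrt (a i (w i) * b i (w i)))"
        by (rule ennreal_leI)
      also have "\<dots> = (\<Prod>i\<in>I. ennreal (sqrt (a i (w i) * b i (w i))))"
        by (rule prod_ennreal[symmetric]) (simp add: na nb)
      finally show ?thesis using True by simp
    qed (simp)
  qed
  also have "\<dots> = (\<Prod>i\<in>I. \<integral>\<^sup>+ x. ennreal (sqrt (a i x * b i x)) \<partial>M)"
    by (rule PM.product_nn_integral_prod[OF fin]) (use ma mb in measurable)
  finally show ?thesis .
qed



lemma bhat_props:
  fixes M :: "'a measure" and p q :: "'a \<Rightarrow> real"
  assumes mp: "p \<in> borel_measurable M" and mq: "q \<in> borel_measurable M"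
    and np: "\<And>x. 0 \<le> p x" and nq: "\<And>x. 0 \<le> q x"
    and ip: "(\<integral>\<^sup>+ x. ennreal (p x) \<partial>M) = 1" and iq: "(\<integral>\<^sup>+ x. ennreal (q x) \<partial>M) = 1"
  shows "(\<integral>\<^sup>+ x. ennreal (sqrt (p x * q x)) \<partial>M) = ennreal (bhattacharyya M p q)"
    and "0 \<le> bhattacharyya M p q" and "bhattacharyya M p q \<le> 1"
proof -
  have le: "(\<integral>\<^sup>+ x. ennreal (sqrt (p x * q x)) \<partial>M) \<le> 1"
  proof -
    have "(\<integral>\<^sup>+ x. ennreal (sqrt (p x * q x)) \<partial>M) \<le> (\<integral>\<^sup>+ x. (ennreal (p x) + ennreal (q x)) / 2 \<partial>M)"
    proof (rule nn_integral_mono)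
      fix x
      have "sqrt (p x * q x) \<le> (p x + q x) / 2" using arith_geo_mean_sqrt[OF np[of x] nq[of x]] .
      then have "ennreal (sqrt (p x * q x)) \<le> ennreal ((p x + q x) / 2)" by (rule ennreal_leI)
      also have "\<dots> = (ennreal (p x) + ennreal (q x)) / 2"
        using np[of x] nq[of x] by (simp add: ennreal_plus[symmetric] divide_ennreal[symmetric] del: ennreal_plus)
      finally show "ennreal (sqrt (p x * q x)) \<le> (ennreal (p x) + ennreal (q x)) / 2" .
    qed
    also have "\<dots> = ((\<integral>\<^sup>+ x. ennreal (p x) \<partial>M) + (\<integral>\<^sup>+ x. ennreal (q x) \<partial>M)) / 2"
      using mp mq by (simp add: divide_ennreal_def nn_integral_multc nn_integral_add)
    also have "\<dots> = 1" using ip iq by (simp add: one_add_one[symmetric] del: one_add_one)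
    finally show ?thesis .
  qed
  have meas: "(\<lambda>x. sqrt (p x * q x)) \<in> borel_measurable M" using mp mq by measurable
  have int: "integrable M (\<lambda>x. sqrt (p x * q x))"
  proof (rule integrableI_bounded)
    show "(\<lambda>x. sqrt (p x * q x)) \<in> borel_measurable M" by fact
    have "(\<integral>\<^sup>+ x. ennreal (norm (sqrt (p x * q x))) \<partial>M) = (\<integral>\<^sup>+ x. ennreal (sqrt (p x * q x)) \<partial>M)"
      using np nq by simp
    then show "(\<integral>\<^sup>+ x. ennreal (norm (sqrt (p x * q x))) \<partial>M) < \<infinity>" using le
      by (simp add: le_less_trans[OF _ ennreal_less_top[of 1]] )
  qed
  show eq: "(\<integral>\<^sup>+ x. ennreal (sqrt (p x * q x)) \<partial>M) = ennreal (bhattacharyya M p q)"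
    unfolding bhattacharyya_def using np nq by (intro nn_integral_eq_integral int) auto
  show nn: "0 \<le> bhattacharyya M p q"
    unfolding bhattacharyya_def using np nq by (intro integral_nonneg_AE) auto
  show "bhattacharyya M p q \<le> 1" using le eq nn by (metis ennreal_le_1)
qed



lemma finite_pairs: "finite (pairs n)"
proof -
  have "pairs n \<subseteq> {..<2*n} \<times> {..<2*n}" by (auto simp: pairs_def)
  then show ?thesis by (rule finite_subset) auto
qed

lemma wsbm_bound:
  fixes M :: "'a measure" and p q :: "'a \<Rightarrow> real"
  assumes sf: "sigma_finite_measure M"
    and mp: "p \<in> borel_measurable M" and mq: "q \<in> borel_measurable M"
    and np: "\<And>x. 0 \<le> p x" and nq: "\<And>x. 0 \<le> q x"
    and ip: "(\<integral>\<^sup>+ x. ennreal (p x) \<partial>M) = 1" and iq: "(\<integral>\<^sup>+ x. ennreal (q x) \<partial>M) = 1"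
  shows "emeasure (wsbm M p q n S) {w \<in> space (wsbm M p q n S). likelihood p q n S w \<le> likelihood p q n T w}
    \<le> ennreal (bhattacharyya M p q) ^ card {e \<in> pairs n. same_comm S e \<noteq> same_comm T e}"
proof -
  define a where "a = (\<lambda>e x. if same_comm S e then p x else q x)"
  define b where "b = (\<lambda>e x. if same_comm T e then p x else q x)"
  let ?D = "{e \<in> pairs n. same_comm S e \<noteq> same_comm T e}"
  let ?B = "bhattacharyya M p q"
  have ma: "\<And>e. a e \<in> borel_measurable M" using mp mq by (simp add: a_def)
  have mb: "\<And>e. b e \<in> borel_measurable M" using mp mq by (simp add: b_def)
  have na: "\<And>e x. 0 \<le> a e x" using np nq by (simp add: a_def)
  have nb: "\<And>e x. 0 \<le> b e x" using np nq by (simp add: b_def)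
  have W: "wsbm M p q n S = PiM (pairs n) (\<lambda>e. density M (\<lambda>x. ennreal (a e x)))"
    by (simp add: wsbm_def a_def)
  have LS: "\<And>w. likelihood p q n S w = (\<Prod>e\<in>pairs n. a e (w e))"
    by (simp add: likelihood_def a_def)
  have LT: "\<And>w. likelihood p q n T w = (\<Prod>e\<in>pairs n. b e (w e))"
    by (simp add: likelihood_def b_def)
  have B1: "(\<integral>\<^sup>+ x. ennreal (sqrt (p x * q x)) \<partial>M) = ennreal ?B"
    by (rule bhat_props(1)[OF mp mq np nq ip iq])
  have B2: "(\<integral>\<^sup>+ x. ennreal (sqrt (q x * p x)) \<partial>M) = ennreal ?B"
    using B1 by (simp add: mult.commute)
  have each: "(\<integral>\<^sup>+ x. ennreal (sqrt (a e x * b e x)) \<partial>M) = (if e \<in> ?D then ennreal ?B else 1)"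
    if "e \<in> pairs n" for e
  proof (cases "same_comm S e = same_comm T e")
    case True
    then have "\<And>x. sqrt (a e x * b e x) = a e x"
      using np nq by (simp add: a_def b_def)
    then show ?thesis using True ip iq by (cases "same_comm T e") (simp_all add: a_def)
  next
    case False
    then show ?thesis using that B1 B2 by (cases "same_comm S e") (auto simp: a_def b_def)
  qed
  have "emeasure (wsbm M p q n S) {w \<in> space (wsbm M p q n S). likelihood p q n S w \<le> likelihood p q n T w}
     \<le> (\<Prod>e\<in>pairs n. \<integral>\<^sup>+ x. ennreal (sqrt (a e x * b e x)) \<partial>M)"
    unfolding W LS LT by (rule chernoff_bound[OF sf finite_pairs ma mb na nb])
  also have "\<dots> = (\<Prod>e\<in>pairs n. if e \<in> ?D then ennreal ?B else 1)"
    by (rule prod.cong) (use each in auto)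
  also have "\<dots> = ennreal ?B ^ card ?D"
    by (simp add: prod.If_cases finite_pairs) (metis Collect_conj_eq Collect_mem_eq)
  finally show ?thesis .
qed


lemma minmax_inj:
  fixes a b a' b' :: nat
  assumes "a \<in> X" "b \<notin> X" "a' \<in> X" "b' \<notin> X" "min a b = min a' b'" "max a b = max a' b'"
  shows "a = a' \<and> b = b'"
proof -
  have "a \<noteq> b'" "a' \<noteq> b" using assms by auto
  then show ?thesis using assms(5,6) unfolding min_def max_def by (auto split: if_splits)
qed

lemma minmax_D:
  fixes a b :: nat
  assumes a: "a \<in> (S - T) \<union> (T - S)" and b: "b \<notin> (S - T) \<union> (T - S)" and "a < 2*n" "b < 2*n"
  shows "(min a b, max a b) \<in> {e \<in> pairs n. same_comm S e \<noteq> same_comm T e}"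
proof -
  have ne: "a \<noteq> b" using a b by auto
  have p: "(min a b, max a b) \<in> pairs n" using ne assms(3,4) by (auto simp: pairs_def min_def max_def)
  have sc: "same_comm U (min a b, max a b) = (a \<in> U \<longleftrightarrow> b \<in> U)" for U
    by (auto simp: same_comm_def min_def max_def)
  have "(a \<in> S \<longleftrightarrow> b \<in> S) \<noteq> (a \<in> T \<longleftrightarrow> b \<in> T)" using a b by blast
  then show ?thesis using p sc by simp
qed


lemma likelihood_compl:
  "likelihood p q n ({..<2*n} - T) w = likelihood p q n T w"
  unfolding likelihood_def
  by (rule prod.cong) (auto simp: pairs_def same_comm_def)

lemma balanced_compl: assumes "T \<in> balanced n" shows "{..<2*n} - T \<in> balanced n"
proof -
  have s: "T \<subseteq> {..<2*n}" and c: "card T = n" using assms by (auto simp: balanced_def)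
  have "finite T" using s by (auto intro: finite_subset)
  then have "card ({..<2*n} - T) = 2*n - n" using card_Diff_subset[OF _ s] c by simp
  then show ?thesis by (simp add: balanced_def)
qed

lemma card_diff_eq:
  assumes "S \<in> balanced n" "T \<in> balanced n"
  shows "card (T - S) = card (S - T)"
proof -
  have f: "finite S" "finite T" using assms by (auto simp: balanced_def intro: finite_subset)
  have "card (T - S) = card T - card (T \<inter> S)" using f by (simp add: card_Diff_subset_Int)
  moreover have "card (S - T) = card S - card (S \<inter> T)" using f by (simp add: card_Diff_subset_Int)
  ultimately show ?thesis using assms by (simp add: balanced_def Int_commute)
qed

lemma card_diff_compl:
  assumes "S \<in> balanced n" "T \<in> balanced n"
  shows "card (S - ({..<2*n} - T)) = n - card (S - T)"
proof -
  have f: "finite S" "finite T" using assms by (auto simp: balanced_def intro: finite_subset)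
  have "S - ({..<2*n} - T) = S \<inter> T" using assms by (auto simp: balanced_def)
  moreover have "card (S - T) = card S - card (S \<inter> T)" using f by (simp add: card_Diff_subset_Int)
  moreover have "card (S \<inter> T) \<le> card S" using f by (simp add: card_mono)
  ultimately show ?thesis using assms by (simp add: balanced_def)
qed

lemma diff_zero_eq:
  assumes "S \<in> balanced n" "T \<in> balanced n" "card (S - T) = 0"
  shows "T = S"
proof -
  have f: "finite S" "finite T" using assms by (auto simp: balanced_def intro: finite_subset)
  then have "S \<subseteq> T" using assms(3) by auto
  moreover have "card S = card T" using assms(1,2) by (simp add: balanced_def)
  ultimately show ?thesis using card_subset_eq[OF f(2)] by blast
qed

lemma diff_n_eq:
  assumes "S \<in> balanced n" "T \<in> balanced n" "card (S - T) = n"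
  shows "T = {..<2*n} - S"
proof -
  have "card (S - ({..<2*n} - T)) = 0" using card_diff_compl[OF assms(1,2)] assms(3) by simp
  then have "{..<2*n} - T = S" using diff_zero_eq[OF assms(1) balanced_compl[OF assms(2)]] by simp
  then show ?thesis using assms(2) by (auto simp: balanced_def)
qed

lemma card_D_ge:
  assumes "S \<in> balanced n" "T \<in> balanced n"
  shows "4 * card (S - T) * (n - card (S - T)) \<le> card {e \<in> pairs n. same_comm S e \<noteq> same_comm T e}"
proof -
  let ?k = "card (S - T)"
  define X where "X = (S - T) \<union> (T - S)"
  define Y where "Y = {..<2*n} - X"
  have sub: "S \<subseteq> {..<2*n}" "T \<subseteq> {..<2*n}" using assms by (auto simp: balanced_def)
  have f: "finite S" "finite T" using sub by (auto intro: finite_subset)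
  have cX: "card X = 2 * ?k"
    unfolding X_def using f card_diff_eq[OF assms] by (subst card_Un_disjoint) auto
  have XS: "X \<subseteq> {..<2*n}" using sub by (auto simp: X_def)
  have cY: "card Y = 2 * n - 2 * ?k" unfolding Y_def using XS cX
    by (simp add: card_Diff_subset finite_subset)
  have kn: "?k \<le> n"
  proof -
    have "card (S - T) \<le> card S" using f by (intro card_mono) auto
    then show ?thesis using assms(1) by (simp add: balanced_def)
  qed
  define g where "g = (\<lambda>(a::nat, b::nat). (min a b, max a b))"
  have inj: "inj_on g (X \<times> Y)"
  proof (rule inj_onI)
    fix u v assume u: "u \<in> X \<times> Y" and v: "v \<in> X \<times> Y" and e: "g u = g v"
    obtain a b where "u = (a, b)" by force
    moreover obtain a' b' where "v = (a', b')" by force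
    ultimately show "u = v" using u v e minmax_inj[of a X b a' b'] by (auto simp: g_def Y_def)
  qed
  have img: "g ` (X \<times> Y) \<subseteq> {e \<in> pairs n. same_comm S e \<noteq> same_comm T e}"
  proof
    fix e assume "e \<in> g ` (X \<times> Y)"
    then obtain a b where ab: "a \<in> X" "b \<in> Y" "e = (min a b, max a b)" by (auto simp: g_def)
    then show "e \<in> {e \<in> pairs n. same_comm S e \<noteq> same_comm T e}"
      using minmax_D[of a S T b n] XS unfolding Y_def X_def by auto
  qed
  have fin: "finite {e \<in> pairs n. same_comm S e \<noteq> same_comm T e}" using finite_pairs by simp
  have "card (X \<times> Y) \<le> card {e \<in> pairs n. same_comm S e \<noteq> same_comm T e}"
    using card_inj_on_le[OF inj img fin] .
  moreover have "card (X \<times> Y) = 4 * ?k * (n - ?k)"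
    using cX cY kn by (simp add: card_cartesian_product diff_mult_distrib2 algebra_simps)
  ultimately show ?thesis by simp
qed

lemma count_T:
  assumes "S \<in> balanced n"
  shows "card {T \<in> balanced n. card (S - T) = k} \<le> (n choose k) ^ 2"
proof -
  have sub: "S \<subseteq> {..<2*n}" and cS: "card S = n" using assms by (auto simp: balanced_def)
  have fS: "finite S" using sub by (auto intro: finite_subset)
  let ?A = "{A. A \<subseteq> S \<and> card A = k}"
  let ?C = "{C. C \<subseteq> {..<2*n} - S \<and> card C = k}"
  define h where "h = (\<lambda>T. (S - T, T - S))"
  have inj: "inj_on h {T \<in> balanced n. card (S - T) = k}"
  proof (rule inj_onI)
    fix T T' assume "T \<in> {T \<in> balanced n. card (S - T) = k}" "T' \<in> {T \<in> balanced n. card (S - T) = k}"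
      and "h T = h T'"
    then have "S - T = S - T'" "T - S = T' - S" by (auto simp: h_def)
    then show "T = T'" by blast
  qed
  have img: "h ` {T \<in> balanced n. card (S - T) = k} \<subseteq> ?A \<times> ?C"
  proof
    fix x assume "x \<in> h ` {T \<in> balanced n. card (S - T) = k}"
    then obtain T where T: "T \<in> balanced n" "card (S - T) = k" and x: "x = h T" by auto
    have "card (T - S) = k" using card_diff_eq[OF assms T(1)] T(2) by simp
    then show "x \<in> ?A \<times> ?C" using T x unfolding h_def balanced_def by auto
  qed
  have cA: "card ?A = n choose k" using n_subsets[OF fS] cS by simp
  have fC: "finite ({..<2*n} - S)" by simp
  have cc: "card ({..<2*n} - S) = n" using card_Diff_subset[OF fS sub] cS by simp
  have cC: "card ?C = n choose k" using n_subsets[OF fC] cc by simp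
  have finAC: "finite (?A \<times> ?C)"
    using fS fC by (auto intro: finite_subset[of _ "Pow S"] finite_subset[of _ "Pow ({..<2*n} - S)"])
  have "card {T \<in> balanced n. card (S - T) = k} \<le> card (?A \<times> ?C)"
    by (rule card_inj_on_le[OF inj img finAC])
  also have "\<dots> = (n choose k) ^ 2" using cA cC by (simp add: card_cartesian_product power2_eq_square)
  finally show ?thesis .
qed



lemma finite_balanced: "finite (balanced n)"
  by (rule finite_subset[of _ "Pow {..<2*n}"]) (auto simp: balanced_def)

lemma recover_if:
  assumes S: "S \<in> balanced n"
    and H: "\<And>T. T \<in> balanced n \<Longrightarrow> 1 \<le> card (S - T) \<Longrightarrow> 2 * card (S - T) \<le> n
              \<Longrightarrow> likelihood p q n T w < likelihood p q n S w"
  shows "mle_recovers p q n S w"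
proof -
  let ?L = "\<lambda>T. likelihood p q n T w"
  let ?Sc = "{..<2*n} - S"
  have Sc: "?Sc \<in> balanced n" by (rule balanced_compl[OF S])
  have LSc: "?L ?Sc = ?L S" by (rule likelihood_compl)
  have strict: "?L T < ?L S" if T: "T \<in> balanced n" "T \<noteq> S" "T \<noteq> ?Sc" for T
  proof -
    let ?k = "card (S - T)"
    have k0: "?k \<noteq> 0" using diff_zero_eq[OF S T(1)] T(2) by auto
    have kn: "?k \<noteq> n" using diff_n_eq[OF S T(1)] T(3) by auto
    have kle: "?k \<le> n"
    proof -
      have fS: "finite S" using S by (auto simp: balanced_def intro: finite_subset)
      have "card (S - T) \<le> card S" using fS by (intro card_mono) auto
      then show ?thesis using S by (simp add: balanced_def)
    qed
    show ?thesis
    proof (cases "2 * ?k \<le> n")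
      case True then show ?thesis using H[OF T(1)] k0 by simp
    next
      case False
      let ?Tc = "{..<2*n} - T"
      have Tc: "?Tc \<in> balanced n" by (rule balanced_compl[OF T(1)])
      have "card (S - ?Tc) = n - ?k" by (rule card_diff_compl[OF S T(1)])
      then have "?L ?Tc < ?L S" using H[OF Tc] False kn kle by simp
      then show ?thesis using likelihood_compl[of p q n T w] by simp
    qed
  qed
  show ?thesis unfolding mle_recovers_def mle_set_def
  proof (intro equalityI subsetI)
    fix T assume "T \<in> {S \<in> balanced n. \<forall>T\<in>balanced n. ?L T \<le> ?L S}"
    then have T: "T \<in> balanced n" "?L S \<le> ?L T" using S by auto
    then show "T \<in> {S, ?Sc}" using strict[OF T(1)] by force
  next
    fix T assume "T \<in> {S, ?Sc}"
    moreover have "\<forall>T'\<in>balanced n. ?L T' \<le> ?L S"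
      using strict by (metis LSc order.refl order.strict_implies_order)
    ultimately show "T \<in> {S \<in> balanced n. \<forall>T\<in>balanced n. ?L T \<le> ?L S}"
      using S Sc LSc by auto
  qed
qed

lemma mle_recovers_iff:
  assumes S: "S \<in> balanced n"
  shows "mle_recovers p q n S w \<longleftrightarrow>
    (\<forall>T\<in>balanced n. (\<forall>T'\<in>balanced n. likelihood p q n T' w \<le> likelihood p q n T w)
        \<longleftrightarrow> (T = S \<or> T = {..<2*n} - S))"
  using S balanced_compl[OF S] unfolding mle_recovers_def mle_set_def by blast



lemma prob_space_wsbm:
  fixes M :: "'a measure" and p q :: "'a \<Rightarrow> real"
  assumes ip: "(\<integral>\<^sup>+ x. ennreal (p x) \<partial>M) = 1" and iq: "(\<integral>\<^sup>+ x. ennreal (q x) \<partial>M) = 1"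
    and mp: "p \<in> borel_measurable M" and mq: "q \<in> borel_measurable M"
  shows "prob_space (wsbm M p q n S)"
  unfolding wsbm_def
proof (rule prob_space_PiM)
  fix e
  show "prob_space (density M (\<lambda>x. ennreal (if same_comm S e then p x else q x)))"
  proof (rule prob_spaceI)
    show "emeasure (density M (\<lambda>x. ennreal (if same_comm S e then p x else q x)))
      (space (density M (\<lambda>x. ennreal (if same_comm S e then p x else q x)))) = 1"
      using ip iq mp mq by (cases "same_comm S e") (auto simp: emeasure_density)
  qed
qed

lemma likelihood_meas[measurable]:
  assumes "p \<in> borel_measurable M" "q \<in> borel_measurable M"
  shows "likelihood p q n T \<in> borel_measurable (wsbm M p q n S)"
  unfolding likelihood_def wsbm_def using assms by measurable

lemma prob_bound:
  fixes M :: "'a measure" and p q :: "'a \<Rightarrow> real"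
  assumes sf: "sigma_finite_measure M"
    and mp: "p \<in> borel_measurable M" and mq: "q \<in> borel_measurable M"
    and np: "\<And>x. 0 \<le> p x" and nq: "\<And>x. 0 \<le> q x"
    and ip: "(\<integral>\<^sup>+ x. ennreal (p x) \<partial>M) = 1" and iq: "(\<integral>\<^sup>+ x. ennreal (q x) \<partial>M) = 1"
    and S: "S \<in> balanced n"
  shows "1 - (\<Sum>k\<in>{1..n div 2}. real (n choose k) ^ 2 * bhattacharyya M p q ^ (4*k*(n-k)))
    \<le> measure (wsbm M p q n S) {w \<in> space (wsbm M p q n S). mle_recovers p q n S w}"
proof -
  let ?P = "wsbm M p q n S"
  let ?B = "bhattacharyya M p q"
  let ?L = "\<lambda>T. likelihood p q n T"
  interpret P: prob_space ?P by (rule prob_space_wsbm[OF ip iq mp mq])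
  have B0: "0 \<le> ?B" and B1: "?B \<le> 1" using bhat_props[OF mp mq np nq ip iq] by auto
  define Bad where "Bad = {T \<in> balanced n. 1 \<le> card (S - T) \<and> 2 * card (S - T) \<le> n}"
  define E where "E = (\<lambda>T. {w \<in> space ?P. ?L S w \<le> ?L T w})"
  define R where "R = {w \<in> space ?P. mle_recovers p q n S w}"
  have finB: "finite Bad" using finite_balanced by (simp add: Bad_def)
  have Em: "E T \<in> P.events" for T unfolding E_def using mp mq by measurable
  have Rm: "R \<in> P.events"
  proof -
    have "R = {w \<in> space ?P. \<forall>T\<in>balanced n. (\<forall>T'\<in>balanced n. ?L T' w \<le> ?L T w)
        \<longleftrightarrow> (T = S \<or> T = {..<2*n} - S)}"
      unfolding R_def using mle_recovers_iff[OF S] by blast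
    also have "\<dots> \<in> P.events"
    proof -
      have lm: "\<And>T. ?L T \<in> borel_measurable ?P" using mp mq by (rule likelihood_meas)
      have p0: "{w \<in> space ?P. ?L T' w \<le> ?L T w} \<in> sets ?P" for T T'
        using lm[of T'] lm[of T] by (rule borel_measurable_le)
      have p1: "Measurable.pred ?P (\<lambda>w. ?L T' w \<le> ?L T w)" for T T' using p0[of T' T] pred_def by blast
      have p2: "Measurable.pred ?P (\<lambda>w. (\<forall>T'\<in>balanced n. ?L T' w \<le> ?L T w) \<longleftrightarrow> (T = S \<or> T = {..<2*n} - S))" for T
        using finite_balanced p1 by measurable
      have "Measurable.pred ?P (\<lambda>w. \<forall>T\<in>balanced n. (\<forall>T'\<in>balanced n. ?L T' w \<le> ?L T w) \<longleftrightarrow> (T = S \<or> T = {..<2*n} - S))"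
        using finite_balanced p2 by measurable
      then show ?thesis by (simp add: pred_def)
    qed
    finally show ?thesis .
  qed
  have sub: "space ?P - R \<subseteq> (\<Union>T\<in>Bad. E T)"
  proof
    fix w assume w: "w \<in> space ?P - R"
    show "w \<in> (\<Union>T\<in>Bad. E T)"
    proof (rule ccontr)
      assume "w \<notin> (\<Union>T\<in>Bad. E T)"
      then have "\<And>T. T \<in> Bad \<Longrightarrow> ?L T w < ?L S w" using w by (auto simp: E_def not_le)
      then have "mle_recovers p q n S w" by (intro recover_if[OF S]) (auto simp: Bad_def)
      then show False using w by (simp add: R_def)
    qed
  qed
  have ET: "P.prob (E T) \<le> ?B ^ (4 * card (S - T) * (n - card (S - T)))" if T: "T \<in> Bad" for T
  proof -
    have Tb: "T \<in> balanced n" using T by (simp add: Bad_def)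
    have "emeasure ?P (E T) \<le> ennreal ?B ^ card {e \<in> pairs n. same_comm S e \<noteq> same_comm T e}"
      unfolding E_def by (rule wsbm_bound[OF sf mp mq np nq ip iq])
    then have "P.prob (E T) \<le> ?B ^ card {e \<in> pairs n. same_comm S e \<noteq> same_comm T e}"
      using B0 by (simp add: P.emeasure_eq_measure ennreal_power)
    also have "\<dots> \<le> ?B ^ (4 * card (S - T) * (n - card (S - T)))"
      using card_D_ge[OF S Tb] B0 B1 by (rule power_decreasing)
    finally show ?thesis .
  qed
  have "1 - P.prob R = P.prob (space ?P - R)" using P.prob_compl[OF Rm] by simp
  also have "\<dots> \<le> P.prob (\<Union>T\<in>Bad. E T)"
    using sub Em finB by (intro P.finite_measure_mono) auto
  also have "\<dots> \<le> (\<Sum>T\<in>Bad. P.prob (E T))"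
    by (rule measure_UNION_le[OF finB]) (use Em in auto)
  also have "\<dots> \<le> (\<Sum>T\<in>Bad. ?B ^ (4 * card (S - T) * (n - card (S - T))))"
    by (rule sum_mono) (rule ET)
  also have "\<dots> = (\<Sum>k\<in>{1..n div 2}. \<Sum>T\<in>{T \<in> Bad. card (S - T) = k}. ?B ^ (4 * card (S - T) * (n - card (S - T))))"
    by (rule sum.group[symmetric, OF finB]) (auto simp: Bad_def)
  also have "\<dots> = (\<Sum>k\<in>{1..n div 2}. real (card {T \<in> Bad. card (S - T) = k}) * ?B ^ (4 * k * (n - k)))"
    by (rule sum.cong) auto
  also have "\<dots> \<le> (\<Sum>k\<in>{1..n div 2}. real (n choose k) ^ 2 * ?B ^ (4 * k * (n - k)))"
  proof (rule sum_mono)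
    fix k assume k: "k \<in> {1..n div 2}"
    have "{T \<in> Bad. card (S - T) = k} = {T \<in> balanced n. card (S - T) = k}"
      using k by (auto simp: Bad_def)
    then have "card {T \<in> Bad. card (S - T) = k} \<le> (n choose k) ^ 2" using count_T[OF S] by simp
    then have "real (card {T \<in> Bad. card (S - T) = k}) \<le> real (n choose k) ^ 2"
      by (metis of_nat_le_iff of_nat_power)
    then show "real (card {T \<in> Bad. card (S - T) = k}) * ?B ^ (4 * k * (n - k))
        \<le> real (n choose k) ^ 2 * ?B ^ (4 * k * (n - k))"
      using B0 by (intro mult_right_mono) auto
  qed
  finally have fin: "1 - P.prob R \<le> (\<Sum>k\<in>{1..n div 2}. real (n choose k) ^ 2 * ?B ^ (4 * k * (n - k)))" .
  have swap: "\<And>x y::real. 1 - x \<le> y \<Longrightarrow> 1 - y \<le> x" by linarith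
  show ?thesis using swap[OF fin] unfolding R_def .
qed



lemma term_bound:
  fixes c eps d b :: real and n k :: nat
  assumes n: "2 \<le> n" and c: "0 < c" and eps: "0 < eps" "eps < 1/2" and cd: "c * (1 - eps) = 1 + d"
    and b0: "0 \<le> b" and b1: "b \<le> exp (- (c * ln n / (2 * n)))"
    and k1: "1 \<le> k" and k2: "2 * k \<le> n"
  shows "real (n choose k) ^ 2 * b ^ (4*k*(n-k))
     \<le> exp (- 2 * d * ln n) ^ k + (4 * exp (- c * eps * ln n)) ^ n"
proof -
  define L where "L = ln (real n)"
  define m where "m = real k"
  define N where "N = real n"
  have L: "0 < L" using n by (simp add: L_def)
  have N: "2 \<le> N" using n by (simp add: N_def)
  have mN: "2 * m \<le> N" using k2 by (simp add: m_def N_def)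
  have m1: "1 \<le> m" using k1 by (simp add: m_def)
  have e4: "real (4*k*(n-k)) = 4 * m * (N - m)" using k2 by (simp add: m_def N_def of_nat_diff)
  have bpow: "b ^ (4*k*(n-k)) \<le> exp (- (c * L * (4 * m * (N - m)) / (2 * N)))"
  proof -
    have "b ^ (4*k*(n-k)) \<le> exp (- (c * L / (2 * N))) ^ (4*k*(n-k))"
      using b0 b1 by (intro power_mono) (auto simp: L_def N_def)
    also have "\<dots> = exp (real (4*k*(n-k)) * (- (c * L / (2 * N))))"
      by (rule exp_of_nat_mult[symmetric])
    also have "\<dots> = exp (- (c * L * (4 * m * (N - m)) / (2 * N)))"
      unfolding e4 by (rule arg_cong[where f=exp]) (simp add: field_simps)
    finally show ?thesis .
  qed
  have rnn: "0 \<le> exp (- 2 * d * ln n) ^ k" by simp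
  have snn: "0 \<le> (4 * exp (- c * eps * ln n)) ^ n" by simp
  show ?thesis
  proof (cases "m \<le> eps * N")
    case True
    have Cb: "real (n choose k) ^ 2 \<le> exp (2 * m * L)"
    proof -
      have kn: "k \<le> n" using k2 by simp
      have "n choose k \<le> n ^ k" by (rule binomial_le_pow[OF kn])
      then have "real (n choose k) \<le> real (n ^ k)" by (rule of_nat_mono)
      then have "real (n choose k) \<le> N ^ k" by (simp add: N_def)
      then have "real (n choose k) ^ 2 \<le> (N ^ k) ^ 2" by (intro power_mono) auto
      also have "\<dots> = exp L ^ (2 * k)"
      proof -
        have "N = exp L" using N by (simp add: L_def N_def)
        then show ?thesis by (simp add: power_mult[symmetric] mult.commute)
      qed
      also have "\<dots> = exp (real (2 * k) * L)" by (rule exp_of_nat_mult[symmetric])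
      finally show ?thesis by (simp add: m_def)
    qed
    have ex: "2 * (1 + d) * m * L \<le> c * L * (4 * m * (N - m)) / (2 * N)"
    proof -
      have "1 - eps \<le> (N - m) / N" using True N by (simp add: field_simps)
      then have "c * (1 - eps) \<le> c * ((N - m) / N)" using c by (intro mult_left_mono) auto
      then have "(1 + d) * (2 * m * L) \<le> c * ((N - m) / N) * (2 * m * L)"
        using cd m1 L by (intro mult_right_mono) auto
      then show ?thesis using N by (simp add: field_simps)
    qed
    have "real (n choose k) ^ 2 * b ^ (4*k*(n-k)) \<le> exp (2 * m * L) * exp (- (c * L * (4 * m * (N - m)) / (2 * N)))"
      using Cb bpow b0 by (intro mult_mono) auto
    also have "\<dots> \<le> exp (2 * m * L) * exp (- (2 * (1 + d) * m * L))"
      using ex by (intro mult_left_mono) auto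
    also have "\<dots> = exp (real k * (- 2 * d * L))"
      by (simp add: exp_add[symmetric] m_def algebra_simps)
    also have "\<dots> = exp (- 2 * d * ln n) ^ k" unfolding L_def by (rule exp_of_nat_mult)
    finally show ?thesis using snn by linarith
  next
    case False
    have Cb: "real (n choose k) ^ 2 \<le> 4 ^ n"
    proof -
      have "real (n choose k) \<le> 2 ^ n" using binomial_le_pow2[of n k]
        by (metis of_nat_le_iff of_nat_numeral of_nat_power)
      then have "real (n choose k) ^ 2 \<le> (2 ^ n) ^ 2" by (intro power_mono) auto
      also have "((2::real) ^ n) ^ 2 = (2 ^ 2) ^ n"
        by (metis power_mult mult.commute)
      also have "\<dots> = 4 ^ n" by simp
      finally show ?thesis .
    qed
    have ex: "c * eps * N * L \<le> c * L * (4 * m * (N - m)) / (2 * N)"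
    proof -
      have "eps * N \<le> m" using False by simp
      have "N / 2 \<le> N - m" using mN by simp
      have "eps * N * (N / 2) \<le> m * (N - m)"
        using \<open>eps * N \<le> m\<close> \<open>N / 2 \<le> N - m\<close> eps N m1 by (intro mult_mono) auto
      then have "c * L * (eps * N * (N / 2)) \<le> c * L * (m * (N - m))"
        using c L by (intro mult_left_mono) auto
      then show ?thesis using N by (simp add: field_simps)
    qed
    have "real (n choose k) ^ 2 * b ^ (4*k*(n-k)) \<le> 4 ^ n * exp (- (c * L * (4 * m * (N - m)) / (2 * N)))"
      using Cb bpow b0 by (intro mult_mono) auto
    also have "\<dots> \<le> 4 ^ n * exp (- (c * eps * N * L))"
      using ex by (intro mult_left_mono) auto
    also have "\<dots> = 4 ^ n * exp (real n * (- c * eps * L))"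
      by (simp add: N_def algebra_simps)
    also have "\<dots> = 4 ^ n * exp (- c * eps * ln n) ^ n"
      unfolding L_def by (simp only: exp_of_nat_mult)
    also have "\<dots> = (4 * exp (- c * eps * ln n)) ^ n"
      by (simp only: power_mult_distrib)
    finally show ?thesis using rnn by linarith
  qed
qed


lemma geom_sum_bound:
  fixes r :: real assumes "0 \<le> r" "r < 1"
  shows "(\<Sum>k\<in>{1..m}. r ^ k) \<le> r / (1 - r)"
proof -
  have "(\<Sum>k\<in>{1..m}. r ^ k) = (\<Sum>i<m. r ^ Suc i)"
  proof -
    have "(\<Sum>k\<in>{1..m}. r ^ k) = (\<Sum>i\<in>{0..<m}. r ^ Suc i)"
      by (rule sum.reindex_bij_witness[of _ Suc "\<lambda>k. k - 1"]) auto
    then show ?thesis by (simp add: atLeast0LessThan)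
  qed
  also have "\<dots> = r * (\<Sum>i<m. r ^ i)" by (simp add: sum_distrib_left)
  also have "(\<Sum>i<m. r ^ i) = (1 - r ^ m) / (1 - r)" using assms by (simp add: sum_gp_strict)
  also have "r * ((1 - r ^ m) / (1 - r)) \<le> r * (1 / (1 - r))"
    using assms by (intro mult_left_mono divide_right_mono) auto
  finally show ?thesis by simp
qed

lemma sum_limit:
  fixes c :: real and B :: "nat \<Rightarrow> real"
  assumes c: "1 < c" and B0: "\<And>n. 0 \<le> B n"
    and ev: "eventually (\<lambda>n. B n \<le> exp (- (c * ln n / (2 * n)))) sequentially"
  shows "(\<lambda>n. \<Sum>k\<in>{1..n div 2}. real (n choose k) ^ 2 * B n ^ (4*k*(n-k))) \<longlonglongrightarrow> 0"
proof -
  define eps where "eps = (c - 1) / (2 * c)"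
  define d where "d = (c - 1) / 2"
  have eps: "0 < eps" "eps < 1/2" using c by (auto simp: eps_def field_simps)
  have d: "0 < d" using c by (simp add: d_def)
  have cd: "c * (1 - eps) = 1 + d" using c by (simp add: eps_def d_def field_simps)
  define r where "r = (\<lambda>n::nat. exp (- 2 * d * ln n))"
  define s where "s = (\<lambda>n::nat. 4 * exp (- c * eps * ln n))"
  define G where "G = (\<lambda>n. r n / (1 - r n) + real n * s n ^ n)"
  have r_lim: "r \<longlonglongrightarrow> 0"
  proof -
    have "(\<lambda>n. real n powr (- 2 * d)) \<longlonglongrightarrow> 0"
      using d by (intro tendsto_neg_powr filterlim_real_sequentially) auto
    moreover have "eventually (\<lambda>n. real n powr (- 2 * d) = r n) sequentially"
      using eventually_gt_at_top[of 0] by eventually_elim (simp add: r_def powr_def)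
    ultimately show ?thesis using Lim_transform_eventually by blast
  qed
  have s_lim: "s \<longlonglongrightarrow> 0"
  proof -
    have "(\<lambda>n. 4 * real n powr (- c * eps)) \<longlonglongrightarrow> 4 * 0"
      using c eps by (intro tendsto_mult tendsto_const tendsto_neg_powr filterlim_real_sequentially)
        (auto simp: mult_pos_pos)
    moreover have "eventually (\<lambda>n. 4 * real n powr (- c * eps) = s n) sequentially"
      using eventually_gt_at_top[of 0] by eventually_elim (simp add: s_def powr_def)
    ultimately show ?thesis using Lim_transform_eventually by fastforce
  qed
  have G_lim: "G \<longlonglongrightarrow> 0"
  proof -
    have "(\<lambda>n. r n / (1 - r n)) \<longlonglongrightarrow> 0 / (1 - 0)"
      by (intro tendsto_divide tendsto_diff r_lim tendsto_const) auto
    moreover have "(\<lambda>n. real n * s n ^ n) \<longlonglongrightarrow> 0"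
    proof (rule tendsto_sandwich[of "\<lambda>_. 0" _ _ "\<lambda>n. real n * (1/2) ^ n"])
      have "eventually (\<lambda>n. s n < 1/2) sequentially"
        using s_lim by (rule order_tendstoD) simp
      then show "eventually (\<lambda>n. real n * s n ^ n \<le> real n * (1/2) ^ n) sequentially"
      proof eventually_elim
        case (elim n)
        have "s n ^ n \<le> (1/2) ^ n" using elim by (intro power_mono) (auto simp: s_def)
        then show ?case by (intro mult_left_mono) auto
      qed
      show "eventually (\<lambda>n. 0 \<le> real n * s n ^ n) sequentially" by (simp add: s_def)
      show "(\<lambda>n. real n * (1/2::real) ^ n) \<longlonglongrightarrow> 0" by (rule powser_times_n_limit_0) simp
    qed simp
    ultimately show ?thesis unfolding G_def by (metis (no_types) add_0 diff_zero div_by_1 tendsto_add)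
  qed
  show ?thesis
  proof (rule tendsto_sandwich[OF _ _ tendsto_const G_lim])
    show "eventually (\<lambda>n. 0 \<le> (\<Sum>k\<in>{1..n div 2}. real (n choose k) ^ 2 * B n ^ (4*k*(n-k)))) sequentially"
      using B0 by (intro always_eventually allI sum_nonneg) auto
    have "eventually (\<lambda>n. r n < 1) sequentially"
      using r_lim by (rule order_tendstoD) simp
    then show "eventually (\<lambda>n. (\<Sum>k\<in>{1..n div 2}. real (n choose k) ^ 2 * B n ^ (4*k*(n-k))) \<le> G n) sequentially"
      using ev eventually_ge_at_top[of 2]
    proof eventually_elim
      case (elim n)
      have "(\<Sum>k\<in>{1..n div 2}. real (n choose k) ^ 2 * B n ^ (4*k*(n-k)))
          \<le> (\<Sum>k\<in>{1..n div 2}. r n ^ k + s n ^ n)"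
      proof (rule sum_mono)
        fix k assume k: "k \<in> {1..n div 2}"
        show "real (n choose k) ^ 2 * B n ^ (4*k*(n-k)) \<le> r n ^ k + s n ^ n"
          unfolding r_def s_def
          by (rule term_bound[OF elim(3) _ eps cd B0 elim(2)]) (use c k in auto)
      qed
      also have "\<dots> = (\<Sum>k\<in>{1..n div 2}. r n ^ k) + real (n div 2) * s n ^ n"
        by (simp add: sum.distrib)
      also have "\<dots> \<le> r n / (1 - r n) + real n * s n ^ n"
      proof (intro add_mono geom_sum_bound mult_right_mono)
        show "0 \<le> r n" by (simp add: r_def)
        show "r n < 1" by fact
        show "real (n div 2) \<le> real n" by simp
        show "0 \<le> s n ^ n" by (simp add: s_def)
      qed
      finally show ?case unfolding G_def .
    qed
  qed
qed


theorem corollary1: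
  fixes M :: "'a measure" and p q :: "nat \<Rightarrow> 'a \<Rightarrow> real" and S :: "nat \<Rightarrow> nat set"
  assumes "sigma_finite_measure M"
    and "\<forall>n. p n \<in> borel_measurable M \<and> q n \<in> borel_measurable M"
    and "\<forall>n x. 0 \<le> p n x \<and> 0 \<le> q n x"
    and "\<forall>n. (\<integral>\<^sup>+ x. ennreal (p n x) \<partial>M) = 1 \<and> (\<integral>\<^sup>+ x. ennreal (q n x) \<partial>M) = 1"
    and "\<forall>n. S n \<in> balanced n"
    and "liminf (\<lambda>n. ereal (real n) * renyi_half M (p n) (q n) / ereal (ln (real n))) > 1"
  shows "(\<lambda>n. measure (wsbm M (p n) (q n) n (S n))
            {w \<in> space (wsbm M (p n) (q n) n (S n)). mle_recovers (p n) (q n) n (S n) w})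
         \<longlonglongrightarrow> 1"
proof -
  note sf = assms(1)
  have mp: "\<And>n. p n \<in> borel_measurable M" and mq: "\<And>n. q n \<in> borel_measurable M" using assms(2) by auto
  have np: "\<And>n x. 0 \<le> p n x" and nq: "\<And>n x. 0 \<le> q n x" using assms(3) by auto
  have ip: "\<And>n. (\<integral>\<^sup>+ x. ennreal (p n x) \<partial>M) = 1" and iq: "\<And>n. (\<integral>\<^sup>+ x. ennreal (q n x) \<partial>M) = 1"
    using assms(4) by auto
  define B where "B = (\<lambda>n. bhattacharyya M (p n) (q n))"
  have B0: "\<And>n. 0 \<le> B n" unfolding B_def using bhat_props(2)[OF mp mq np nq ip iq] .
  define F where "F = (\<lambda>n. \<Sum>k\<in>{1..n div 2}. real (n choose k) ^ 2 * B n ^ (4*k*(n-k)))"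
  define P where "P = (\<lambda>n. measure (wsbm M (p n) (q n) n (S n))
            {w \<in> space (wsbm M (p n) (q n) n (S n)). mle_recovers (p n) (q n) n (S n) w})"
  obtain c :: real where c1: "1 < c" and cL: "ereal c < liminf (\<lambda>n. ereal (real n) * renyi_half M (p n) (q n) / ereal (ln (real n)))"
  proof -
    from assms(6) obtain z where z: "1 < z" "z < liminf (\<lambda>n. ereal (real n) * renyi_half M (p n) (q n) / ereal (ln (real n)))"
      using dense by blast
    then have ze: "z = ereal (real_of_ereal z)" by (cases z) auto
    show ?thesis
    proof (rule that)
      from z(1) have "1 < ereal (real_of_ereal z)" by (subst (asm) ze)
      then show "1 < real_of_ereal z" by (simp add: one_ereal_def)
      show "ereal (real_of_ereal z) < liminf (\<lambda>n. ereal (real n) * renyi_half M (p n) (q n) / ereal (ln (real n)))"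
        using z(2) by (subst ze[symmetric])
    qed
  qed
  have ev1: "eventually (\<lambda>n. ereal c < ereal (real n) * renyi_half M (p n) (q n) / ereal (ln (real n))) sequentially"
    using less_LiminfD[OF cL] .
  have evB: "eventually (\<lambda>n. B n \<le> exp (- (c * ln n / (2 * n)))) sequentially"
    using ev1 eventually_ge_at_top[of 2]
  proof eventually_elim
    case (elim n)
    have L: "0 < ln (real n)" using elim(2) by simp
    show ?case
    proof (cases "B n = 0")
      case True then show ?thesis by simp
    next
      case False
      then have Bp: "0 < B n" using B0[of n] by simp
      have "renyi_half M (p n) (q n) = ereal (- 2 * ln (B n))"
        using False by (simp add: renyi_half_def B_def)
      then have "c < real n * (- 2 * ln (B n)) / ln (real n)"
        using elim(1) L by (simp add: divide_ereal_def divide_inverse)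
      then have "c * ln (real n) < real n * (- 2 * ln (B n))"
        using L by (simp add: field_simps)
      then have "ln (B n) < - (c * ln n / (2 * n))"
        using elim(2) by (simp add: field_simps)
      then have "exp (ln (B n)) < exp (- (c * ln n / (2 * n)))" by simp
      then show ?thesis using Bp by simp
    qed
  qed
  have F0: "F \<longlonglongrightarrow> 0" unfolding F_def by (rule sum_limit[OF c1 B0 evB])
  have lower: "1 - F n \<le> P n" for n
    unfolding F_def P_def B_def by (rule prob_bound[OF sf mp mq np nq ip iq assms(5)[rule_format]])
  have upper: "P n \<le> 1" for n
  proof -
    interpret prob_space "wsbm M (p n) (q n) n (S n)" by (rule prob_space_wsbm[OF ip iq mp mq])
    show ?thesis unfolding P_def by (rule prob_le_1)
  qed
  have "(\<lambda>n. 1 - F n) \<longlonglongrightarrow> 1 - 0" by (intro tendsto_diff tendsto_const F0)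
  then have "P \<longlonglongrightarrow> 1"
    by (intro tendsto_sandwich[of "\<lambda>n. 1 - F n" P sequentially "\<lambda>_. 1"]) (auto simp: lower upper)
  then show ?thesis unfolding P_def .
qed


end
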